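(* Let $R$ be a ring, $n$ a positive integer, and let $I$ be a weakly $n$-absorbing ideal of $R$ that is not an $n$-absorbing ideal. Then: (1) $I^{n+1}=\{0\}$; (2) $\sqrt{I}=\mathrm{Nil}(R)$; (3) if $M$ is an $R$-module with $IM=M$, then $M=\{0\}$.
   Context: All rings are commutative with $1\neq0$. A proper ideal $I$ of $R$ is $n$-absorbing if whenever $a_1\cdots a_{n+1}\in I$ with $a_1,\dots,a_{n+1}\in R$, there are $n$ of the $a_i$'s whose product is in $I$; it is weakly $n$-absorbing if this holds whenever $0\neq a_1\cdots a_{n+1}\in I$. $\mathrm{Nil}(R)$ is the ideal of nilpotent elements of $R$. *)

theory Defs
  imports Main "HOL.Modules"
begin

definition is_ideal :: "'a::comm_ring_1 set \<Rightarrow> bool" where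
  "is_ideal I \<longleftrightarrow> 0 \<in> I \<and> (\<forall>x\<in>I. \<forall>y\<in>I. x + y \<in> I) \<and> (\<forall>r. \<forall>x\<in>I. r * x \<in> I)"

definition proper_ideal :: "'a::comm_ring_1 set \<Rightarrow> bool" where
  "proper_ideal I \<longleftrightarrow> is_ideal I \<and> I \<noteq> UNIV"

definition n_absorbing :: "nat \<Rightarrow> 'a::comm_ring_1 set \<Rightarrow> bool" where
  "n_absorbing n I \<longleftrightarrow> proper_ideal I \<and>
     (\<forall>a :: nat \<Rightarrow> 'a. (\<Prod>i\<in>{0..n}. a i) \<in> I \<longrightarrow>
        (\<exists>j\<in>{0..n}. (\<Prod>i\<in>{0..n} - {j}. a i) \<in> I))"

definition weakly_n_absorbing :: "nat \<Rightarrow> 'a::comm_ring_1 set \<Rightarrow> bool" where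
  "weakly_n_absorbing n I \<longleftrightarrow> proper_ideal I \<and>
     (\<forall>a :: nat \<Rightarrow> 'a. (\<Prod>i\<in>{0..n}. a i) \<noteq> 0 \<longrightarrow> (\<Prod>i\<in>{0..n}. a i) \<in> I \<longrightarrow>
        (\<exists>j\<in>{0..n}. (\<Prod>i\<in>{0..n} - {j}. a i) \<in> I))"

definition ideal_gen :: "'a::comm_ring_1 set \<Rightarrow> 'a set" where
  "ideal_gen S = \<Inter>{J. is_ideal J \<and> S \<subseteq> J}"

definition ideal_power :: "'a::comm_ring_1 set \<Rightarrow> nat \<Rightarrow> 'a set" where
  "ideal_power I k = ideal_gen {prod_list xs | xs. length xs = k \<and> set xs \<subseteq> I}"

definition radical :: "'a::comm_ring_1 set \<Rightarrow> 'a set" where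
  "radical I = {x. \<exists>m::nat. x ^ m \<in> I}"

definition nilradical :: "'a::comm_ring_1 set" where
  "nilradical = {x. \<exists>m::nat. x ^ m = 0}"

(* IM for an R-module M (carrier = the type 'b, scalar multiplication scale):
   the submodule generated by all a\<cdot>m with a \<in> I, m \<in> M *)
definition ideal_smult :: "('a::comm_ring_1 \<Rightarrow> 'b::ab_group_add \<Rightarrow> 'b) \<Rightarrow> 'a set \<Rightarrow> 'b set" where
  "ideal_smult scale I = module.span scale {scale a m | a m. a \<in> I}"

end

theory Submission
  imports Defs
begin

lemma prod_list_nth: "prod_list (xs :: 'a::comm_monoid_mult list) = (\<Prod>i<length xs. xs ! i)"
proof (induction xs)
  case Nil then show ?case by simp
next
  case (Cons y ys)
  then show ?case by (simp del: prod.lessThan_Suc add: prod.lessThan_Suc_shift)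
qed

lemma ideal_diff: "is_ideal I \<Longrightarrow> x \<in> I \<Longrightarrow> y \<in> I \<Longrightarrow> x - y \<in> I"
  unfolding is_ideal_def
  by (metis add_uminus_conv_diff mult_minus1)

lemma ideal_mult_right: "is_ideal I \<Longrightarrow> x \<in> I \<Longrightarrow> x * r \<in> I"
  unfolding is_ideal_def by (metis mult.commute)

lemma prod_cong_ideal:
  fixes I :: "'a::comm_ring_1 set"
  assumes I: "is_ideal I" and "finite A" and "\<forall>i\<in>A. c i - a i \<in> I"
  shows "prod c A - prod a A \<in> I"
  using assms(2,3)
proof (induction A rule: finite_induct)
  case empty then show ?case using I by (simp add: is_ideal_def)
next
  case (insert k A)
  have e: "prod c (insert k A) - prod a (insert k A)
      = a k * (prod c A - prod a A) + (c k - a k) * prod c A"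
    using insert by (simp add: algebra_simps)
  have "a k * (prod c A - prod a A) \<in> I" using insert I by (simp add: is_ideal_def)
  moreover have "(c k - a k) * prod c A \<in> I"
    using insert I ideal_mult_right by auto
  ultimately show ?case unfolding e using I by (simp add: is_ideal_def)
qed

lemma prod_in_ideal:
  fixes I :: "'a::comm_ring_1 set"
  assumes I: "is_ideal I" and "finite A" "k \<in> A" "f k \<in> I"
  shows "prod f A \<in> I"
proof -
  have "prod f A = f k * prod f (A - {k})" using assms by (simp add: prod.remove)
  then show ?thesis using assms ideal_mult_right by metis
qed

lemma key:
  fixes I :: "'a::comm_ring_1 set" and a :: "nat \<Rightarrow> 'a"
  assumes W: "weakly_n_absorbing n I"
    and a0: "(\<Prod>i\<in>{0..n}. a i) = 0"
    and na: "\<forall>j\<in>{0..n}. (\<Prod>i\<in>{0..n} - {j}. a i) \<notin> I"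
  shows "finite S \<Longrightarrow> S \<subseteq> {0..n} \<Longrightarrow> \<forall>i\<in>{0..n}. x i \<in> I \<Longrightarrow>
     (\<Prod>i\<in>{0..n}. if i \<in> S then x i else a i) = 0"
proof (induction S arbitrary: x rule: finite_psubset_induct)
  case (psubset S)
  let ?N = "{0..n::nat}"
  have I: "is_ideal I" using W by (simp add: weakly_n_absorbing_def proper_ideal_def)
  show ?case
  proof (rule ccontr)
    let ?z = "(\<Prod>i\<in>?N. if i \<in> S then x i else a i)"
    assume nz: "?z \<noteq> 0"
    define g where "g i = (if i \<in> S then x i else 0)" for i
    define b where "b i = a i + g i" for i
    have "(\<Prod>i\<in>?N. b i) = (\<Sum>X\<in>Pow ?N. (\<Prod>i\<in>X. g i) * (\<Prod>i\<in>?N-X. a i))"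
      unfolding b_def by (subst add.commute) (rule prod_add, simp)
    also have "\<dots> = (\<Sum>X\<in>{S}. (\<Prod>i\<in>X. g i) * (\<Prod>i\<in>?N-X. a i))"
    proof (rule sum.mono_neutral_right)
      show "{S} \<subseteq> Pow ?N" "finite (Pow ?N)" using psubset by auto
      show "\<forall>X\<in>Pow ?N - {S}. (\<Prod>i\<in>X. g i) * (\<Prod>i\<in>?N-X. a i) = 0"
      proof
        fix X assume X: "X \<in> Pow ?N - {S}"
        show "(\<Prod>i\<in>X. g i) * (\<Prod>i\<in>?N-X. a i) = 0"
        proof (cases "X \<subseteq> S")
          case True
          then have "X \<subset> S" using X by auto
          then have "(\<Prod>i\<in>?N. if i \<in> X then x i else a i) = 0"
            using psubset by auto
          moreover have "(\<Prod>i\<in>?N. if i \<in> X then x i else a i)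
              = (\<Prod>i\<in>X. x i) * (\<Prod>i\<in>?N-X. a i)"
            using X by (simp add: prod.If_cases Int_absorb1 Diff_eq)
          moreover have "(\<Prod>i\<in>X. g i) = (\<Prod>i\<in>X. x i)"
            using True by (intro prod.cong) (auto simp: g_def)
          ultimately show ?thesis by simp
        next
          case False
          then obtain k where "k \<in> X" "k \<notin> S" by auto
          moreover have "finite X" using X finite_subset by auto
          ultimately have "(\<Prod>i\<in>X. g i) = 0"
            by (metis g_def prod_zero)
          then show ?thesis by simp
        qed
      qed
    qed
    also have "\<dots> = ?z"
    proof -
      have "(\<Prod>i\<in>S. g i) = (\<Prod>i\<in>S. x i)" by (intro prod.cong) (auto simp: g_def)
      moreover have "?z = (\<Prod>i\<in>S. x i) * (\<Prod>i\<in>?N-S. a i)"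
        using psubset by (simp add: prod.If_cases Int_absorb1 Diff_eq)
      ultimately show ?thesis by simp
    qed
    finally have bz: "(\<Prod>i\<in>?N. b i) = ?z" .
    have "S \<noteq> {}"
    proof
      assume "S = {}"
      then have "?z = (\<Prod>i\<in>?N. a i)" by simp
      then show False using nz a0 by simp
    qed
    then obtain s where s: "s \<in> S" by auto
    have "?z \<in> I"
      using prod_in_ideal[OF I, of ?N s] s psubset by auto
    then obtain j where j: "j \<in> ?N" "(\<Prod>i\<in>?N - {j}. b i) \<in> I"
      using W nz bz unfolding weakly_n_absorbing_def by metis
    have "\<forall>i\<in>?N - {j}. b i - a i \<in> I"
      using psubset I by (auto simp: b_def g_def is_ideal_def)
    then have "(\<Prod>i\<in>?N - {j}. b i) - (\<Prod>i\<in>?N - {j}. a i) \<in> I"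
      by (intro prod_cong_ideal[OF I]) auto
    then have "(\<Prod>i\<in>?N - {j}. b i) - ((\<Prod>i\<in>?N - {j}. b i) - (\<Prod>i\<in>?N - {j}. a i)) \<in> I"
      using ideal_diff[OF I] j by blast
    then show False using na j by simp
  qed
qed

theorem mainTheorem5:
  fixes I :: "'a::comm_ring_1 set" and n :: nat
    and scale :: "'a \<Rightarrow> 'b::ab_group_add \<Rightarrow> 'b"
  assumes "n \<ge> 1"
    and "weakly_n_absorbing n I"
    and "\<not> n_absorbing n I"
  shows "ideal_power I (n + 1) = {0}
    \<and> radical I = nilradical
    \<and> (module scale \<longrightarrow> ideal_smult scale I = UNIV \<longrightarrow> (UNIV :: 'b set) = {0})"
proof -
  let ?N = "{0..n::nat}"
  have W: "weakly_n_absorbing n I" by fact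
  have I: "is_ideal I" and pr: "proper_ideal I"
    using assms(2) by (auto simp: weakly_n_absorbing_def proper_ideal_def)
  obtain a :: "nat \<Rightarrow> 'a" where ain: "(\<Prod>i\<in>?N. a i) \<in> I"
      and na: "\<forall>j\<in>?N. (\<Prod>i\<in>?N - {j}. a i) \<notin> I"
    using assms(3) pr unfolding n_absorbing_def by blast
  have a0: "(\<Prod>i\<in>?N. a i) = 0"
    using W ain na unfolding weakly_n_absorbing_def by blast
  have Z: "\<And>x. \<forall>i\<in>?N. x i \<in> I \<Longrightarrow> (\<Prod>i\<in>?N. x i) = 0"
  proof -
    fix x :: "nat \<Rightarrow> 'a" assume "\<forall>i\<in>?N. x i \<in> I"
    from key[OF W a0 na, of ?N x] this show "(\<Prod>i\<in>?N. x i) = 0" by simp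
  qed
  have Z': "\<And>x. \<forall>i<Suc n. x i \<in> I \<Longrightarrow> (\<Prod>i<Suc n. x i) = 0"
  proof -
    fix x :: "nat \<Rightarrow> 'a" assume "\<forall>i<Suc n. x i \<in> I"
    moreover have "{..<Suc n} = ?N" by auto
    ultimately show "(\<Prod>i<Suc n. x i) = 0" using Z by (metis atLeastAtMost_iff le_imp_less_Suc)
  qed
  have P1: "ideal_power I (n + 1) = {0}"
  proof -
    let ?G = "{prod_list xs | xs. length xs = n + 1 \<and> set xs \<subseteq> I}"
    have G: "?G \<subseteq> {0}"
    proof
      fix y assume "y \<in> ?G"
      then obtain xs where xs: "y = prod_list xs" "length xs = Suc n" "set xs \<subseteq> I" by auto
      have "(\<Prod>i<Suc n. xs ! i) = 0"
        using xs by (intro Z') auto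
      then show "y \<in> {0}" using xs by (simp add: prod_list_nth)
    qed
    have "is_ideal ({0} :: 'a set)" by (simp add: is_ideal_def)
    then have "ideal_gen ?G \<subseteq> {0}" using G unfolding ideal_gen_def by blast
    moreover have "0 \<in> ideal_gen ?G" unfolding ideal_gen_def is_ideal_def by blast
    ultimately show ?thesis unfolding ideal_power_def by blast
  qed
  have P2: "radical I = nilradical"
  proof
    show "radical I \<subseteq> nilradical"
    proof
      fix y assume "y \<in> radical I"
      then obtain m where m: "y ^ m \<in> I" by (auto simp: radical_def)
      have "(\<Prod>i<Suc n. y ^ m) = 0" using m by (intro Z') auto
      then have "(y ^ m) ^ Suc n = 0" by simp
      then have "y ^ (m * Suc n) = 0" by (simp only: power_mult)
      then show "y \<in> nilradical" unfolding nilradical_def by blast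
    qed
    show "nilradical \<subseteq> radical I"
      using I unfolding nilradical_def radical_def is_ideal_def by auto metis
  qed
  have P3: "module scale \<longrightarrow> ideal_smult scale I = UNIV \<longrightarrow> (UNIV :: 'b set) = {0}"
  proof (intro impI)
    assume M: "module scale" and IM: "ideal_smult scale I = UNIV"
    interpret module scale by (fact M)
    define P where "P k = {\<Prod>i<k. x i | x :: nat \<Rightarrow> 'a. \<forall>i<k. x i \<in> I}" for k :: nat
    have step: "UNIV \<subseteq> span {scale p m | p m. p \<in> P k}" for k :: nat
      proof (induction k)
        case 0
        have "P 0 = {1}" by (auto simp: P_def)
        then show ?case by (auto intro!: span_base)
      next
        case (Suc k)
        let ?T = "span {scale p m | p m. p \<in> P (Suc k)}"
        have base: "scale p (scale c m) \<in> ?T" if pP: "p \<in> P k" and cI: "c \<in> I" for p c m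
        proof -
          obtain x where x: "p = (\<Prod>i<k. x i)" "\<forall>i<k. x i \<in> I" using pP unfolding P_def by blast
          have "p * c = (\<Prod>i<Suc k. (x(k := c)) i)"
            using x by (simp add: prod.lessThan_Suc)
          moreover have "\<forall>i<Suc k. (x(k := c)) i \<in> I" using x cI by auto
          ultimately have "p * c \<in> P (Suc k)" unfolding P_def by blast
          then show ?thesis by (auto simp: scale_scale intro!: span_base)
        qed
        have sub: "scale p y \<in> ?T" if "p \<in> P k" "y \<in> span {scale c m | c m. c \<in> I}" for p y
        proof -
          have "span {scale c m | c m. c \<in> I} \<subseteq> {y. scale p y \<in> ?T}"
          proof (rule span_minimal)
            show "{scale c m | c m. c \<in> I} \<subseteq> {y. scale p y \<in> ?T}" using base that by auto
            show "subspace {y. scale p y \<in> ?T}"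
            proof -
              have comm: "scale p (scale c y) = scale c (scale p y)" for c y
                by (simp add: scale_scale mult.commute)
              show ?thesis unfolding subspace_def
              proof (intro conjI ballI allI)
                show "0 \<in> {y. scale p y \<in> ?T}" by (simp add: span_zero)
                show "y + z \<in> {y. scale p y \<in> ?T}" if "y \<in> {y. scale p y \<in> ?T}" "z \<in> {y. scale p y \<in> ?T}" for y z
                  using that by (simp add: scale_right_distrib span_add)
                show "scale c y \<in> {y. scale p y \<in> ?T}" if "y \<in> {y. scale p y \<in> ?T}" for c y
                  using that by (simp only: mem_Collect_eq comm span_scale)
              qed
            qed
          qed
          then show ?thesis using that by auto
        qed
        have "{scale p m | p m. p \<in> P k} \<subseteq> ?T"
          using sub IM unfolding ideal_smult_def by auto
        then have "span {scale p m | p m. p \<in> P k} \<subseteq> ?T"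
          by (intro span_minimal) auto
        then show ?case using Suc by auto
      qed
    have "P (Suc n) \<subseteq> {0}" using Z' unfolding P_def by auto
    then have "{scale p m | p m. p \<in> P (Suc n)} \<subseteq> {0}" by auto
    then have "span {scale p m | p m. p \<in> P (Suc n)} \<subseteq> {0}"
      by (intro span_minimal) (auto simp: subspace_def)
    then show "(UNIV :: 'b set) = {0}" using step[of "Suc n"] by auto
  qed
  show ?thesis using P1 P2 P3 by blast
qed

end
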